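(* For integers $k\ge1$ and $0\le m\le k$, $$C_{1/2,m}(k):=\sum_{j=0}^m(-1)^j\binom{m}{j}\binom{j/2}{k}=(-1)^k\,\frac{2^{-2k+m}\,m}{2k-m}\binom{2k-m}{k}.$$
   Context: For real $x$ and $k\in\mathbb{N}$, $\binom{x}{k}=x(x-1)\cdots(x-k+1)/k!$. *)

theory Defs
  imports Complex_Main
begin

end

theory Submission
  imports Defs
begin

definition dd :: "(nat \<Rightarrow> real) \<Rightarrow> nat \<Rightarrow> real" where
  "dd f = (\<lambda>j. f j - f (Suc j))"

lemma dd_sum: "(dd ^^ m) f j = (\<Sum>i\<le>m. (-1)^i * real (m choose i) * f (j+i))"
proof (induction m arbitrary: j)
  case 0
  then show ?case by simp
next
  case (Suc m)
  have "(dd ^^ Suc m) f j = (dd ^^ m) f j - (dd ^^ m) f (Suc j)"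
    by (simp add: dd_def)
  also have "\<dots> = (\<Sum>i\<le>m. (-1)^i * real (m choose i) * f (j+i))
       - (\<Sum>i\<le>m. (-1)^i * real (m choose i) * f (j+Suc i))"
    using Suc by simp
  also have "(\<Sum>i\<le>m. (-1)^i * real (m choose i) * f (j+i))
     = f j + (\<Sum>i\<le>m. (-1)^(Suc i) * real (m choose Suc i) * f (j+Suc i))"
  proof -
    have "(\<Sum>i\<le>Suc m. (-1)^i * real (m choose i) * f (j+i))
       = (\<Sum>i\<le>m. (-1)^i * real (m choose i) * f (j+i))" by (simp add: binomial_eq_0)
    moreover have "(\<Sum>i\<le>Suc m. (-1)^i * real (m choose i) * f (j+i))
       = f j + (\<Sum>i\<le>m. (-1)^(Suc i) * real (m choose Suc i) * f (j+Suc i))"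
      by (subst sum.atMost_Suc_shift) simp
    ultimately show ?thesis by (simp add: binomial_eq_0)
  qed
  also have "(\<Sum>i\<le>Suc m. (-1)^i * real (Suc m choose i) * f (j+i))
     = f j + (\<Sum>i\<le>m. (-1)^(Suc i) * real (Suc m choose Suc i) * f (j+Suc i))"
    by (subst sum.atMost_Suc_shift) simp
  moreover have "(\<Sum>i\<le>m. (-1)^(Suc i) * real (Suc m choose Suc i) * f (j+Suc i))
     = (\<Sum>i\<le>m. (-1)^(Suc i) * real (m choose Suc i) * f (j+Suc i))
       - (\<Sum>i\<le>m. (-1)^i * real (m choose i) * f (j+Suc i))"
    unfolding sum_subtractf[symmetric] by (rule sum.cong) (simp_all add: algebra_simps)
  ultimately show ?case by simp
qed

lemma dd_lin: "(dd ^^ m) (\<lambda>j. a * f j + g j) = (\<lambda>j. a * (dd ^^ m) f j + (dd ^^ m) g j)"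
  by (induction m) (auto simp: dd_def algebra_simps)

definition fk :: "nat \<Rightarrow> nat \<Rightarrow> real" where
  "fk k = (\<lambda>j. (real j / 2) gchoose k)"

lemma dd2: "dd (dd (fk (Suc k))) = (\<lambda>j. 2 * dd (fk (Suc k)) j + fk k j)"
proof
  fix j
  have "real (Suc (Suc j)) / 2 = real j / 2 + 1" by simp
  hence "fk (Suc k) (Suc (Suc j)) = fk k j + fk (Suc k) j"
    unfolding fk_def by (simp only: gbinomial_Suc_Suc)
  thus "dd (dd (fk (Suc k))) j = 2 * dd (fk (Suc k)) j + fk k j"
    by (simp add: dd_def)
qed

lemma rec: "(dd ^^ Suc (Suc m)) (fk (Suc k)) 0
   = 2 * (dd ^^ Suc m) (fk (Suc k)) 0 + (dd ^^ m) (fk k) 0"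
proof -
  have "(dd ^^ Suc (Suc m)) (fk (Suc k)) = (dd ^^ m) (dd (dd (fk (Suc k))))"
    by (simp add: funpow_Suc_right del: funpow.simps)
  also have "\<dots> = (\<lambda>j. 2 * (dd ^^ m) (dd (fk (Suc k))) j + (dd ^^ m) (fk k) j)"
    by (simp add: dd2 dd_lin)
  also have "(dd ^^ m) (dd (fk (Suc k))) = (dd ^^ Suc m) (fk (Suc k))"
    by (simp add: funpow_Suc_right del: funpow.simps)
  finally show ?thesis by simp
qed

definition H :: "nat \<Rightarrow> nat \<Rightarrow> real" where
  "H m k = (-1)^k * 2^m * real m * fact (2*k-m-1) / (4^k * fact k * fact (k-m))"

lemma half_gchoose: "-((1/2::real) gchoose Suc k) = H 1 (Suc k)"
proof (induction k)
  case 0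
  then show ?case by (simp add: H_def)
next
  case (Suc k)
  have m1: "real (Suc k) * ((1/2::real) gchoose Suc k) + real (Suc (Suc k)) * ((1/2) gchoose Suc (Suc k))
     = (1/2) * ((1/2) gchoose Suc k)"
    using gbinomial_mult_1[of "1/2::real" "Suc k"] by simp
  have f1: "fact (2 * Suc (Suc k) - 1 - 1) = (real (2*k+2) * real (2*k+1)) * (fact (2*Suc k - 1 - 1) :: real)"
  proof -
    have "2 * Suc (Suc k) - 1 - 1 = Suc (Suc (2*k))" by simp
    moreover have "2 * Suc k - 1 - 1 = 2*k" by simp
    ultimately show ?thesis by (simp add: algebra_simps)
  qed
  have "H 1 (Suc (Suc k)) = H 1 (Suc k) * (-(real (2*k+2) * real (2*k+1)) / (4 * real (Suc (Suc k)) * real (Suc k)))"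
    unfolding H_def using f1 by (simp add: field_simps) (simp add: divide_simps algebra_simps)
  also have "\<dots> = -((1/2::real) gchoose Suc k) * (-(real (2*k+2) * real (2*k+1)) / (4 * real (Suc (Suc k)) * real (Suc k)))"
    using Suc by simp
  also have "\<dots> = -((1/2::real) gchoose Suc (Suc k))"
  proof -
    have g2: "(1/2::real) gchoose Suc(Suc k) = (1/2 - real (Suc k)) / real (Suc (Suc k)) * ((1/2) gchoose Suc k)"
      using m1 by (simp add: field_simps)
    have "real (Suc (Suc k)) > 0" "real (Suc k) > 0" by simp_all
    then show ?thesis unfolding g2 by (simp add: divide_simps del: of_nat_Suc) (simp add: algebra_simps)
  qed
  finally show ?case by simp
qed

lemma H_rec: "H (n+2) (n+2+t) = 2 * H (n+1) (n+2+t) + H n (n+1+t)"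
proof -
  define F where "F = (fact (n+2*t+1) :: real)"
  define K where "K = (fact (n+1+t) :: real)"
  define T where "T = (fact t :: real)"
  define P where "P = (4::real)^(n+1+t)"
  define S where "S = (-1::real)^(n+1+t)"
  have Fp: "F > 0" "K > 0" "T > 0" "P > 0" unfolding F_def K_def T_def P_def by simp_all
  have S2: "S * S = 1" unfolding S_def by (simp flip: power_add add: power_even_eq[symmetric])
  have e1: "H (n+2) (n+2+t) = - S * 2^(n+2) * real (n+2) * F / (4 * P * (real (n+2+t) * K) * T)"
  proof -
    have "2*(n+2+t)-(n+2)-1 = n+2*t+1" "n+2+t-(n+2) = t" by simp_all
    moreover have "fact (n+2+t) = real (n+2+t) * K" unfolding K_def
      by (metis add_Suc_right fact_Suc of_nat_fact add_2_eq_Suc' add.commute add.left_commute  plus_1_eq_Suc)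
    moreover have "(-1::real)^(n+2+t) = - S" "(4::real)^(n+2+t) = 4 * P" unfolding S_def P_def
      by (simp_all add: add.commute add.left_commute)
    ultimately show ?thesis unfolding H_def F_def T_def by (simp add: algebra_simps)
  qed
  have e2: "H (n+1) (n+2+t) = - S * 2^(n+1) * real (n+1) * (real (n+2*t+2) * F) / (4 * P * (real (n+2+t) * K) * (real (t+1) * T))"
  proof -
    have "2*(n+2+t)-(n+1)-1 = Suc (n+2*t+1)" "n+2+t-(n+1) = Suc t" by simp_all
    moreover have "fact (n+2+t) = real (n+2+t) * K" unfolding K_def
      by (metis add_Suc_right fact_Suc of_nat_fact add_2_eq_Suc' add.commute add.left_commute  plus_1_eq_Suc)
    moreover have "(-1::real)^(n+2+t) = - S" "(4::real)^(n+2+t) = 4 * P" unfolding S_def P_def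
      by (simp_all add: add.commute add.left_commute)
    ultimately show ?thesis unfolding H_def F_def T_def by (simp add: algebra_simps)
  qed
  have e3: "H n (n+1+t) = S * 2^n * real n * F / (P * K * (real (t+1) * T))"
  proof -
    have "2*(n+1+t)-n-1 = n+2*t+1" "n+1+t-n = Suc t" by simp_all
    thus ?thesis unfolding H_def F_def T_def K_def S_def P_def by (simp add: algebra_simps)
  qed
  have "real (n+2+t) > 0" "real (t+1) > 0" by simp_all
  show ?thesis unfolding e1 e2 e3 using Fp
    by (simp add: divide_simps del: of_nat_add) (simp add: algebra_simps)
qed


lemma D_eq: "1 \<le> k \<Longrightarrow> m \<le> k \<Longrightarrow> (dd^^m) (fk k) 0 = H m k"
proof (induction m arbitrary: k rule: less_induct)
  case (less m)
  show ?case
  proof (cases m)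
    case 0
    then show ?thesis using less.prems by (simp add: fk_def H_def gbinomial_0_left)
  next
    case (Suc m')
    show ?thesis
    proof (cases m')
      case 0
      obtain k' where k: "k = Suc k'" using less.prems by (cases k) auto
      have "(dd^^m) (fk k) 0 = - ((1/2::real) gchoose Suc k')"
        using Suc 0 k by (simp add: dd_def fk_def)
      then show ?thesis using half_gchoose Suc 0 k by simp
    next
      case (Suc n)
      obtain k' where k: "k = Suc k'" using less.prems by (cases k) auto
      have mm: "m = Suc (Suc n)" using Suc \<open>m = Suc m'\<close> by simp
      have "(dd^^m) (fk k) 0 = 2 * (dd ^^ Suc n) (fk (Suc k')) 0 + (dd ^^ n) (fk k') 0"
        unfolding mm k by (rule rec)
      also have "(dd ^^ Suc n) (fk (Suc k')) 0 = H (Suc n) (Suc k')"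
        using less.IH[of "Suc n" "Suc k'"] mm k less.prems by simp
      also have "(dd ^^ n) (fk k') 0 = H n k'"
        using less.IH[of n k'] mm k less.prems by simp
      finally have "(dd^^m) (fk k) 0 = 2 * H (Suc n) (Suc k') + H n k'" .
      moreover obtain t where t: "k' = n+1+t"
        using less.prems mm k by (intro that[of "k' - (n+1)"]) simp
      ultimately show ?thesis using H_rec[of n t] mm k
        by (simp add: add.commute add.left_commute)
    qed
  qed
qed

theorem mainTheorem4:
  fixes k m :: nat
  assumes "k \<ge> 1" and "m \<le> k"
  shows "(\<Sum>j=0..m. (-1::real) ^ j * real (m choose j) * ((real j / 2) gchoose k))
       = (-1) ^ k * (2 powi (int m - 2 * int k) * real m / real (2 * k - m))
           * real ((2 * k - m) choose k)"
proof -
  have "(\<Sum>j=0..m. (-1::real) ^ j * real (m choose j) * ((real j / 2) gchoose k)) = (dd^^m) (fk k) 0"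
    by (simp add: dd_sum fk_def atLeast0AtMost)
  also have "\<dots> = H m k" using D_eq assms by simp
  also have "\<dots> = (-1) ^ k * (2 powi (int m - 2 * int k) * real m / real (2 * k - m))
           * real ((2 * k - m) choose k)"
  proof (cases m)
    case 0
    then show ?thesis by (simp add: H_def)
  next
    case (Suc m')
    have q: "(2::real) powi (2 * int k) = 4^k"
    proof -
      have "2 * int k = int (2*k)" by simp
      hence "(2::real) powi (2 * int k) = 2^(2*k)" by (simp only: power_int_of_nat)
      thus ?thesis by (simp add: power_mult)
    qed
    have pw: "(2::real) powi (int m - 2 * int k) = 2^m / 4^k"
      by (simp add: power_int_diff q)
    have ch: "real ((2 * k - m) choose k) = fact (2*k-m) / (fact k * fact (2*k-m-k))"
      using assms by (subst binomial_fact) auto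
    have f: "(fact (2*k-m) :: real) = real (2*k-m) * fact (2*k-m-1)"
    proof -
      obtain r where r: "2*k-m = Suc r" using assms Suc by (cases "2*k-m") auto
      hence "2*k-m-1 = r" by simp
      thus ?thesis using r by simp
    qed
    have "2*k-m-k = k-m" by simp
    have pos: "real (2*k-m) > 0" using assms Suc by simp
    show ?thesis unfolding H_def pw ch f \<open>2*k-m-k = k-m\<close> using pos
      by (simp add: field_simps)
  qed
  finally show ?thesis .
qed

end
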